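(* For $n\ge2$ let $\beta_n$ and $\gamma_n$ be the minimal zeros of $U^{\mathrm{e}}_n(x)$ and $S_n(x)$ respectively. Then $\beta_2=\gamma_2=-\frac12$; $$-1<\gamma_{2n+1}<\cos\frac{(2n+1)\pi}{2n+2}<\beta_{2n+1}=\cos\frac{2n\pi}{2n+2}\quad(n\ge1);$$ $$-1<\beta_{2n}=\cos\frac{2n\pi}{2n+1}<\gamma_{2n}<\cos\frac{(2n-1)\pi}{2n+1}\quad(n\ge2).$$
   Context: $U_n(x)$ is the Chebyshev polynomial of the second kind ($U_n(\cos\theta)=\sin((n+1)\theta)/\sin\theta$), with $U_{-1}=0$. The partial Chebyshev polynomial $U^{\mathrm{e}}_n$ is the polynomial with $U^{\mathrm{e}}_n(\cos\theta)=\frac{\sin((n+1)\theta/2)}{\sin(\theta/2)}$ for even $n$ and $U^{\mathrm{e}}_n(\cos\theta)=\frac{\sin((n+1)\theta/2)}{\sin\theta}$ for odd $n$. For $n\ge0$, $S_{2n}(x)=(2nx+x+2n-1)U_n(x)-(2nx+3x+2n+1)U_{n-1}(x)$ and $S_{2n+1}(x)=2(2nx^2+2x^2+2nx-x-1)U_n(x)-2(2nx+3x+2n+1)U_{n-1}(x)$. *)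

theory Defs
  imports "HOL-Analysis.Analysis" "HOL-Computational_Algebra.Polynomial"
begin

fun chebU :: "nat \<Rightarrow> real poly" where
  "chebU 0 = 1"
| "chebU (Suc 0) = [:0, 2:]"
| "chebU (Suc (Suc n)) = [:0, 2:] * chebU (Suc n) - chebU n"

definition chebU_pred :: "nat \<Rightarrow> real poly" where
  "chebU_pred n = (if n = 0 then 0 else chebU (n - 1))"

definition chebUe :: "nat \<Rightarrow> real poly" where
  "chebUe n = (THE p. \<forall>t\<in>{0<..<pi}.
      poly p (cos t) = (if even n then sin ((real n + 1) * t / 2) / sin (t / 2)
                                  else sin ((real n + 1) * t / 2) / sin t))"

definition polyS :: "nat \<Rightarrow> real poly" where
  "polyS k = (let m = real (k div 2) in
     if even k then
       [:2*m - 1, 2*m + 1:] * chebU (k div 2) - [:2*m + 1, 2*m + 3:] * chebU_pred (k div 2)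
     else
       2 * [:-1, 2*m - 1, 2*m + 2:] * chebU (k div 2) - 2 * [:2*m + 1, 2*m + 3:] * chebU_pred (k div 2))"

definition min_zero :: "real poly \<Rightarrow> real" where
  "min_zero p = Min {x. poly p x = 0}"

end

theory Submission
  imports Defs
begin

lemma U_sin: "poly (chebU k) (cos t) * sin t = sin ((real k + 1) * t)"
proof (induction k rule: chebU.induct)
  case 1 then show ?case by simp
next
  case 2 then show ?case by (simp add: sin_double)
next
  case (3 n)
  have "poly (chebU (Suc (Suc n))) (cos t) * sin t
      = 2*cos t * (poly (chebU (Suc n)) (cos t) * sin t) - poly (chebU n) (cos t) * sin t"
    by (simp add: algebra_simps)
  also have "\<dots> = 2*cos t * sin((real n + 2)*t) - sin((real n+1)*t)" using 3 by (simp add: add.commute)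
  also have "\<dots> = sin((real n + 3)*t)"
  proof -
    have a: "(real n + 3)*t = (real n+2)*t + t" and b: "(real n+1)*t = (real n+2)*t - t"
      by (simp_all add: algebra_simps)
    show ?thesis unfolding a b by (simp add: sin_add sin_diff)
  qed
  finally show ?case by (simp add: add.commute add.left_commute)
qed

lemma U_neg: "poly (chebU k) (-y) = (-1)^k * poly (chebU k) y"
  by (induction k rule: chebU.induct) (auto simp: algebra_simps)

lemma U_one: "poly (chebU k) 1 = real k + 1"
  by (induction k rule: chebU.induct) (auto simp: algebra_simps)

lemma U_mono: assumes "y \<ge> 1"
  shows "poly (chebU k) y \<ge> 1 \<and> poly (chebU (Suc k)) y - poly (chebU k) y \<ge> 1"
proof (induction k)
  case 0 then show ?case using assms by simp
next
  case (Suc k)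
  let ?u = "poly (chebU (Suc k)) y" and ?v = "poly (chebU k) y"
  have u: "?u \<ge> 1" using Suc by simp
  have "(y-1) * ?u \<ge> 0" using u assms by simp
  then have "y * ?u \<ge> ?u" by (simp add: algebra_simps)
  moreover have "poly (chebU (Suc (Suc k))) y = 2*(y*?u) - ?v" by simp
  ultimately show ?case using Suc u by linarith
qed

lemma S_even: "poly (polyS (2*n)) x = (2*real n*x + x + 2*real n - 1)*poly (chebU n) x
   - (2*real n*x+3*x+2*real n+1) * poly (chebU_pred n) x"
  unfolding polyS_def Let_def by (simp add: algebra_simps)

lemma S_odd: "poly (polyS (2*n+1)) x = 2*(2*real n*x^2+2*x^2+2*real n*x - x - 1)*poly (chebU n) x
   - 2*(2*real n*x+3*x+2*real n+1) * poly (chebU_pred n) x"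
  unfolding polyS_def Let_def by (simp add: algebra_simps power2_eq_square)

lemma poly_eq_on_Ioo:
  assumes "\<forall>t\<in>{0<..<pi}. poly p (cos t) = f t" "\<forall>t\<in>{0<..<pi}. poly q (cos t) = f t"
  shows "p = q"
proof (rule ccontr)
  assume "p \<noteq> q"
  then have nz: "p - q \<noteq> 0" by simp
  have "{-1<..<(1::real)} \<subseteq> {x. poly (p - q) x = 0}"
  proof
    fix x :: real assume x: "x \<in> {-1<..<1}"
    then have b: "0 < arccos x \<and> arccos x < pi" using arccos_lt_bounded by auto
    have c: "cos (arccos x) = x" using x by simp
    show "x \<in> {x. poly (p - q) x = 0}" using assms b c by force
  qed
  then have "finite {-1<..<(1::real)}" using poly_roots_finite[OF nz] finite_subset by blast
  then show False using infinite_Ioo[of "-1::real" 1] by simp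
qed

lemma chebUe_odd: "chebUe (2*m+1) = chebU m"
  unfolding chebUe_def
proof (rule the_equality)
  show "\<forall>t\<in>{0<..<pi}. poly (chebU m) (cos t) = (if even (2*m+1) then sin ((real (2*m+1) + 1) * t / 2) / sin (t / 2)
                                  else sin ((real (2*m+1) + 1) * t / 2) / sin t)"
  proof
    fix t assume t: "t \<in> {0<..<pi}"
    then have "sin t > 0" by (simp add: sin_gt_zero)
    then have P: "poly (chebU m) (cos t) = sin ((real m + 1) * t) / sin t"
      using U_sin[of m t] by (simp add: field_simps)
    have eq: "(real (2*m+1) + 1) * t / 2 = (real m + 1) * t" by (simp add: field_simps)
    show "poly (chebU m) (cos t) = (if even (2*m+1) then sin ((real (2*m+1) + 1) * t / 2) / sin (t / 2)
                                  else sin ((real (2*m+1) + 1) * t / 2) / sin t)"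
      unfolding eq using P by simp
  qed
  then show "\<And>p. \<forall>t\<in>{0<..<pi}. poly p (cos t) = (if even (2*m+1) then sin ((real (2*m+1) + 1) * t / 2) / sin (t / 2)
                                  else sin ((real (2*m+1) + 1) * t / 2) / sin t) \<Longrightarrow> p = chebU m"
    by - (rule poly_eq_on_Ioo, assumption+)
qed

lemma half_sum: "sin ((real m + 1) * (2*h)) + sin (real m * (2*h)) = 2 * sin ((2*real m+1)*h) * cos h"
proof -
  have a: "(real m + 1) * (2*h) = (2*real m+1)*h + h" and b: "real m * (2*h) = (2*real m+1)*h - h"
    by (simp_all add: algebra_simps)
  show ?thesis unfolding a b by (simp add: sin_add sin_diff)
qed

lemma chebUe_even: assumes "m \<ge> 1" shows "chebUe (2*m) = chebU m + chebU_pred m"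
  unfolding chebUe_def
proof (rule the_equality)
  show "\<forall>t\<in>{0<..<pi}. poly (chebU m + chebU_pred m) (cos t) = (if even (2*m) then sin ((real (2*m) + 1) * t / 2) / sin (t / 2)
                                  else sin ((real (2*m) + 1) * t / 2) / sin t)"
  proof
    fix t assume t: "t \<in> {0<..<pi}"
    define h where "h = t/2"
    have th: "t = 2*h" unfolding h_def by simp
    have h: "0 < h" "h < pi/2" using t unfolding h_def by auto
    have sh: "sin h > 0" using h by (intro sin_gt_zero) auto
    have ch: "cos h > 0" using h by (intro cos_gt_zero) auto
    have st: "sin t = 2 * sin h * cos h" unfolding th by (simp add: sin_double)
    have p1: "poly (chebU m) (cos t) * sin t = sin ((real m + 1) * (2*h))" using U_sin[of m t] th by simp
    have p2: "poly (chebU_pred m) (cos t) * sin t = sin (real m * (2*h))"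
      using U_sin[of "m-1" t] th assms by (simp add: chebU_pred_def of_nat_diff)
    have "poly (chebU m + chebU_pred m) (cos t) * sin t = 2 * sin ((2*real m+1)*h) * cos h"
      using p1 p2 half_sum[of m h] by (simp add: algebra_simps)
    then have "cos h * (2 * (poly (chebU m + chebU_pred m) (cos t) * sin h)) = cos h * (2 * sin ((2*real m+1)*h))"
      unfolding st by (simp add: algebra_simps)
    then have "poly (chebU m + chebU_pred m) (cos t) * sin h = sin ((2*real m+1)*h)"
      using ch by simp
    then have "poly (chebU m + chebU_pred m) (cos t) = sin ((2*real m+1)*h) / sin h"
      using sh by (simp add: field_simps)
    moreover have "(real (2*m) + 1) * t / 2 = (2*real m+1)*h" unfolding th by simp
    ultimately show "poly (chebU m + chebU_pred m) (cos t) = (if even (2*m) then sin ((real (2*m) + 1) * t / 2) / sin (t / 2)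
                                  else sin ((real (2*m) + 1) * t / 2) / sin t)"
      by (simp add: h_def)
  qed
  then show "\<And>p. \<forall>t\<in>{0<..<pi}. poly p (cos t) = (if even (2*m) then sin ((real (2*m) + 1) * t / 2) / sin (t / 2)
                                  else sin ((real (2*m) + 1) * t / 2) / sin t) \<Longrightarrow> p = chebU m + chebU_pred m"
    by - (rule poly_eq_on_Ioo, assumption+)
qed

lemma min_zero_eqI:
  assumes "poly p L = 0" "\<And>x. x < L \<Longrightarrow> poly p x \<noteq> 0" "p \<noteq> 0"
  shows "min_zero p = L"
  unfolding min_zero_def
  by (rule Min_eqI) (use assms poly_roots_finite[OF assms(3)] in \<open>auto simp: not_less[symmetric]\<close>)

lemma min_zero_between:
  assumes "\<And>x. x \<le> L \<Longrightarrow> poly p x \<noteq> 0" "poly p r = 0" "p \<noteq> 0"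
  shows "L < min_zero p \<and> min_zero p \<le> r"
proof -
  have f: "finite {x. poly p x = 0}" using poly_roots_finite[OF assms(3)] .
  have ne: "{x. poly p x = 0} \<noteq> {}" using assms(2) by auto
  have "min_zero p \<in> {x. poly p x = 0}" unfolding min_zero_def using Min_in[OF f ne] .
  then have "L < min_zero p" using assms(1) not_less by blast
  moreover have "min_zero p \<le> r" unfolding min_zero_def using Min_le[OF f] assms(2) by auto
  ultimately show ?thesis by simp
qed

lemma poly_IVT:
  fixes p :: "real poly"
  assumes "a < b" "poly p a * poly p b < 0"
  shows "\<exists>x. a < x \<and> x < b \<and> poly p x = 0"
proof -
  have c: "continuous_on {a..b} (poly p)" by (intro continuous_intros)
  have "\<exists>x. a \<le> x \<and> x \<le> b \<and> poly p x = 0"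
  proof (cases "poly p a < 0")
    case True
    then have "poly p b > 0" using assms(2) by (simp add: mult_less_0_iff)
    then show ?thesis using IVT'[of "poly p" a 0 b] True c assms(1) by auto
  next
    case False
    then have "poly p a > 0" "poly p b < 0" using assms(2) by (auto simp add: mult_less_0_iff)
    then show ?thesis using IVT2'[of "poly p" b 0 a] c assms(1) by auto
  qed
  then obtain x where "a \<le> x" "x \<le> b" "poly p x = 0" by blast
  moreover have "x \<noteq> a" "x \<noteq> b" using assms(2) \<open>poly p x = 0\<close> by auto
  ultimately show ?thesis by (intro exI[of _ x]) auto
qed

lemma sin_ne0: assumes "real n * pi < z" "z < (real n + 1) * pi" shows "sin z \<noteq> 0"
proof
  assume "sin z = 0"
  then obtain i :: int where i: "z = of_int i * pi" using sin_zero_iff_int2 by blast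
  have "real n < of_int i" using assms(1) i by simp
  moreover have "of_int i < real n + 1" using assms(2) i by simp
  ultimately have "int n < i" "i < int n + 1" by linarith+
  then show False by simp
qed

lemma arccos_bridge:
  assumes "-1 < x" "x \<le> cos tL" "0 < tL" "tL < pi"
  shows "tL \<le> arccos x \<and> arccos x < pi \<and> cos (arccos x) = x \<and> (x < cos tL \<longrightarrow> tL < arccos x)"
proof -
  have x1: "x < 1"
  proof -
    have "cos tL < 1" using assms(3,4) cos_mono_less_eq[of tL 0] by simp
    then show ?thesis using assms(2) by simp
  qed
  have b: "0 < arccos x \<and> arccos x < pi" using arccos_lt_bounded assms(1) x1 by auto
  have c: "arccos (cos tL) = tL" using assms by (simp add: arccos_cos)
  have "tL \<le> arccos x"
  proof (cases "x = cos tL")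
    case True then show ?thesis using c by simp
  next
    case False
    then have "arccos (cos tL) < arccos x" using assms arccos_less_arccos[of x "cos tL"] by simp
    then show ?thesis using c by simp
  qed
  moreover have "x < cos tL \<longrightarrow> tL < arccos x" using assms arccos_less_arccos[of x "cos tL"] c by auto
  ultimately show ?thesis using b assms(1) x1 by simp
qed

lemma U_nz_le: assumes "x \<le> -1" shows "poly (chebU n) x \<noteq> 0"
proof -
  have "poly (chebU n) x = (-1)^n * poly (chebU n) (-x)" using U_neg[of n "-x"] by simp
  moreover have "poly (chebU n) (-x) \<ge> 1" using U_mono[of "-x" n] assms by simp
  ultimately show ?thesis by simp
qed

lemma U_min_zero: assumes "n \<ge> 1" shows "min_zero (chebU n) = cos (real n * pi / (real n + 1))"
proof (rule min_zero_eqI)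
  define tL where "tL = real n * pi / (real n + 1)"
  have tL: "0 < tL" "tL < pi" using assms unfolding tL_def by (auto simp: field_simps)
  have "sin tL > 0" using tL by (simp add: sin_gt_zero)
  moreover have "poly (chebU n) (cos tL) * sin tL = 0"
    using U_sin[of n tL] unfolding tL_def by simp
  ultimately show "poly (chebU n) (cos (real n * pi / (real n + 1))) = 0" unfolding tL_def by simp
  show "poly (chebU n) x \<noteq> 0" if x: "x < cos (real n * pi / (real n + 1))" for x
  proof (cases "x \<le> -1")
    case True then show ?thesis by (rule U_nz_le)
  next
    case False
    define t where "t = arccos x"
    have br: "tL < t" "t < pi" "cos t = x" using arccos_bridge[of x tL] False x tL unfolding t_def tL_def by auto
    have "sin ((real n + 1) * t) \<noteq> 0"
    proof (rule sin_ne0)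
      show "real n * pi < (real n + 1) * t"
        using br(1) unfolding tL_def by (simp add: field_simps)
      show "(real n + 1) * t < (real n + 1) * pi" using br(2) by simp
    qed
    then show ?thesis using U_sin[of n t] br(3) by auto
  qed
  show "chebU n \<noteq> 0" using U_one[of n] by auto
qed

lemma V_trig: assumes "m \<ge> 1" "0 < h" "h < pi/2"
  shows "poly (chebU m + chebU_pred m) (cos (2*h)) * sin h = sin ((2*real m+1)*h)"
proof -
  define t where "t = 2*h"
  have th: "t = 2*h" unfolding t_def by simp
  have sh: "sin h > 0" using assms by (intro sin_gt_zero) auto
  have ch: "cos h > 0" using assms by (intro cos_gt_zero) auto
  have st: "sin t = 2 * sin h * cos h" unfolding th by (simp add: sin_double)
  have p1: "poly (chebU m) (cos t) * sin t = sin ((real m + 1) * (2*h))" using U_sin[of m t] th by simp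
  have p2: "poly (chebU_pred m) (cos t) * sin t = sin (real m * (2*h))"
    using U_sin[of "m-1" t] th assms by (simp add: chebU_pred_def of_nat_diff)
  have "poly (chebU m + chebU_pred m) (cos t) * sin t = 2 * sin ((2*real m+1)*h) * cos h"
    using p1 p2 half_sum[of m h] by (simp add: algebra_simps)
  then have "cos h * (2 * (poly (chebU m + chebU_pred m) (cos t) * sin h)) = cos h * (2 * sin ((2*real m+1)*h))"
    unfolding st by (simp add: algebra_simps)
  then show ?thesis using ch unfolding t_def by simp
qed

lemma V_min_zero: assumes "n \<ge> 1"
  shows "min_zero (chebU n + chebU_pred n) = cos (2 * real n * pi / (2 * real n + 1))"
proof (rule min_zero_eqI)
  define hL where "hL = real n * pi / (2 * real n + 1)"
  have eqL: "2 * real n * pi / (2 * real n + 1) = 2 * hL" unfolding hL_def by simp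
  have hL: "0 < hL" "hL < pi/2" using assms unfolding hL_def by (auto simp: field_simps)
  have "sin hL > 0" using hL by (intro sin_gt_zero) auto
  moreover have "poly (chebU n + chebU_pred n) (cos (2*hL)) * sin hL = 0"
  proof -
    have "(2*real n+1)*hL = real n * pi" unfolding hL_def by (simp add: field_simps)
    then show ?thesis using V_trig[OF assms hL] by simp
  qed
  ultimately show "poly (chebU n + chebU_pred n) (cos (2 * real n * pi / (2 * real n + 1))) = 0"
    unfolding eqL by simp
  show "poly (chebU n + chebU_pred n) x \<noteq> 0" if x: "x < cos (2 * real n * pi / (2 * real n + 1))" for x
  proof (cases "x \<le> -1")
    case True
    obtain k where k: "n = Suc k" using assms by (cases n) auto
    have "poly (chebU n + chebU_pred n) x = (-1)^n * (poly (chebU (Suc k)) (-x) - poly (chebU k) (-x))"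
      using U_neg[of n "-x"] U_neg[of k "-x"] unfolding k by (simp add: chebU_pred_def algebra_simps)
    moreover have "poly (chebU (Suc k)) (-x) - poly (chebU k) (-x) \<ge> 1" using U_mono[of "-x" k] True by simp
    ultimately show ?thesis by simp
  next
    case False
    define t where "t = arccos x"
    have tL: "0 < 2*hL" "2*hL < pi" using hL by auto
    have br: "2*hL < t" "t < pi" "cos t = x" using arccos_bridge[of x "2*hL"] False x tL unfolding t_def eqL by auto
    define h where "h = t/2"
    have h: "0 < h" "h < pi/2" "hL < h" using br tL unfolding h_def by auto
    have "sin ((2*real n+1)*h) \<noteq> 0"
    proof (rule sin_ne0)
      show "real n * pi < (2*real n + 1) * h"
        using h(3) unfolding hL_def by (simp add: field_simps)
      have "(2*real n + 1) * h < (2*real n + 1) * (pi/2)" using h(2) by (intro mult_strict_left_mono) auto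
      moreover have "(2*real n + 1) * (pi/2) \<le> (real n + 1) * pi" using pi_gt_zero by (simp add: algebra_simps)
      ultimately show "(2*real n + 1) * h < (real n + 1) * pi" by linarith
    qed
    moreover have "cos (2*h) = x" using br unfolding h_def by simp
    ultimately show ?thesis using V_trig[OF assms h(1,2)] by auto
  qed
  show "chebU n + chebU_pred n \<noteq> 0"
  proof
    assume "chebU n + chebU_pred n = 0"
    then have "poly (chebU n + chebU_pred n) (-1) = 0" by simp
    moreover obtain k where k: "n = Suc k" using assms by (cases n) auto
    moreover have "poly (chebU n + chebU_pred n) (-1) = (-1)^n * (poly (chebU (Suc k)) 1 - poly (chebU k) 1)"
      using U_neg[of n 1] U_neg[of k 1] unfolding k by (simp add: chebU_pred_def algebra_simps)
    ultimately show False using U_one by simp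
  qed
qed

lemma sgn_sq: "((-1::real)^n) * (-1)^n = 1"
  by (simp flip: power_add)

lemma S_odd_min: assumes "n \<ge> 1"
  shows "-1 < min_zero (polyS (2*n+1)) \<and> min_zero (polyS (2*n+1)) < cos ((2*real n + 1) * pi / (2*real n + 2))"
proof -
  obtain k where k: "n = Suc k" using assms by (cases n) auto
  define s :: real where "s = (-1)^n"
  have ss: "s * s = 1" unfolding s_def by (rule sgn_sq)
  define P where "P = polyS (2*n+1)"
  define A where "A = (\<lambda>x::real. 2*(2*real n*x^2+2*x^2+2*real n*x - x - 1))"
  define B where "B = (\<lambda>x::real. 2*(2*real n*x+3*x+2*real n+1))"
  have Pf: "poly P x = A x * poly (chebU n) x - B x * poly (chebU k) x" for x
    unfolding P_def A_def B_def S_odd by (simp add: chebU_pred_def k)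
  have neg: "poly P x \<noteq> 0" if x: "x \<le> -1" for x
  proof -
    define u where "u = poly (chebU n) (-x)"
    define v where "v = poly (chebU k) (-x)"
    have uv: "u - v \<ge> 1" "v \<ge> 1" using U_mono[of "-x" k] x unfolding u_def v_def k by auto
    have Un: "poly (chebU n) x = s * u" using U_neg[of n "-x"] unfolding u_def s_def by simp
    have Uk: "poly (chebU k) x = - s * v" using U_neg[of k "-x"] unfolding v_def s_def k by simp
    have e1: "A x - 4 = 2 * ((x+1) * ((2*real n+2)*x - 3))" unfolding A_def by (simp add: algebra_simps power2_eq_square)
    have xn: "real n * x \<le> real n * (-1)" using x by (intro mult_left_mono) auto
    have "(x+1) * ((2*real n+2)*x - 3) \<ge> 0"
      using x xn by (intro mult_nonpos_nonpos) (auto simp: algebra_simps)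
    then have A4: "A x \<ge> 4" using e1 by linarith
    have e2: "A x + B x = 4 * ((x+1) * ((real n+1)*x + real n))" unfolding A_def B_def by (simp add: algebra_simps power2_eq_square)
    have "(x+1) * ((real n+1)*x + real n) \<ge> 0"
      using x xn by (intro mult_nonpos_nonpos) (auto simp: algebra_simps)
    then have AB: "A x + B x \<ge> 0" using e2 by linarith
    have "A x * (u - v) \<ge> 4 * 1" using A4 uv by (intro mult_mono) auto
    moreover have "(A x + B x) * v \<ge> 0" using AB uv by simp
    ultimately have pos: "A x * u + B x * v > 0" by (simp add: algebra_simps)
    have "poly P x = s * (A x * u + B x * v)" unfolding Pf Un Uk by (simp add: algebra_simps)
    then show ?thesis using pos ss by auto
  qed
  have Pm1: "poly P (-1) = 4 * s"
  proof -
    have "poly (chebU n) (-1) = s * (real n + 1)" using U_neg[of n 1] U_one[of n] unfolding s_def by simp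
    moreover have "poly (chebU k) (-1) = - s * real n" using U_neg[of k 1] U_one[of k] unfolding s_def k by simp
    ultimately show ?thesis unfolding Pf A_def B_def by (simp add: algebra_simps)
  qed
  define t0 where "t0 = (2*real n + 1) * pi / (2*real n + 2)"
  define R where "R = cos t0"
  have t0: "0 < t0" "t0 < pi" unfolding t0_def using pi_gt_zero by (auto simp: field_simps intro!: add_pos_nonneg)
  have st0: "sin t0 > 0" using t0 by (simp add: sin_gt_zero)
  have Rm1: "R > -1"
  proof -
    have "cos pi < cos t0" using t0 by (subst cos_mono_less_eq) auto
    then show ?thesis unfolding R_def by simp
  qed
  have nt: "(real n + 1) * t0 = real n * pi + pi/2" unfolding t0_def by (simp add: field_simps)
  have sn: "sin ((real n + 1) * t0) = s" unfolding nt s_def by (simp add: sin_add)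
  have cn: "cos ((real n + 1) * t0) = 0" unfolding nt s_def by (simp add: cos_add)
  have U1: "poly (chebU n) R * sin t0 = s" using U_sin[of n t0] sn unfolding R_def by simp
  have U2: "poly (chebU k) R * sin t0 = s * R"
  proof -
    have "(real k + 1) * t0 = (real n + 1) * t0 - t0" unfolding k by (simp add: algebra_simps)
    then show ?thesis using U_sin[of k t0] sn cn unfolding R_def by (simp add: sin_diff)
  qed
  have "poly P R * sin t0 = A R * (poly (chebU n) R * sin t0) - B R * (poly (chebU k) R * sin t0)"
    unfolding Pf by (simp add: algebra_simps)
  also have "\<dots> = -2 * s * (R+1)^2" unfolding U1 U2 A_def B_def by (simp add: algebra_simps power2_eq_square)
  finally have PR: "poly P R * sin t0 = -2 * s * (R+1)^2" .
  have "poly P (-1) * poly P R < 0"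
  proof -
    have "poly P (-1) * (poly P R * sin t0) = -8 * (s * s) * (R+1)^2" unfolding Pm1 PR by (simp add: algebra_simps)
    also have "\<dots> < 0" using Rm1 ss by simp
    finally have "(poly P (-1) * poly P R) * sin t0 < 0" by (simp add: algebra_simps)
    then show ?thesis using st0 by (simp add: mult_less_0_iff)
  qed
  then obtain r where r: "-1 < r" "r < R" "poly P r = 0" using poly_IVT[of "-1" R P] Rm1 by auto
  have Pnz: "P \<noteq> 0" using Pm1 ss by auto
  have "-1 < min_zero P \<and> min_zero P \<le> r" using min_zero_between[of "-1" P r] neg r Pnz by auto
  then show ?thesis using r unfolding P_def R_def t0_def by auto
qed

lemma K_neg: assumes "n \<ge> 2"
  shows "(real n + 1) * cos (2 * real n * pi / (2 * real n + 1)) + real n < 0"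
proof -
  define w where "w = pi / (2 * (2 * real n + 1))"
  have w0: "w > 0" unfolding w_def by simp
  have eq: "2 * real n * pi / (2 * real n + 1) = pi - 2*w" unfolding w_def by (simp add: field_simps)
  have "\<bar>sin w\<bar> \<le> \<bar>w\<bar>" by (rule abs_sin_x_le_abs_x)
  then have "\<bar>sin w\<bar>^2 \<le> w^2" using w0 by (metis abs_ge_zero abs_of_pos power_mono)
  then have sw: "sin w ^ 2 \<le> w^2" by simp
  have c: "cos (2*w) \<ge> 1 - 2 * w^2" using sw cos_double_sin[of w] by linarith
  have p2: "pi * pi < 16" using mult_strict_mono[OF pi_less_4 pi_less_4] pi_gt_zero by simp
  have gen: "\<And>D::real. D > 0 \<Longrightarrow> 2*(pi/(2*D))^2 = pi*pi/(2*D^2)" by (simp add: field_simps power2_eq_square)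
  have w2: "2 * w^2 = pi * pi / (2 * (2*real n+1)^2)" unfolding w_def by (rule gen) simp
  have nn: "real n * real n \<ge> 2 * real n" using assms by (intro mult_right_mono) auto
  have nn8: "real n * (real n * 8) \<ge> 16 * real n" using nn by simp
  have r2: "real n \<ge> 2" using assms by simp
  have "14 + real n * 8 < real n * (real n * 8)" using nn8 r2 by linarith
  then have big: "16 * (real n + 1) < 2 * (2*real n+1)^2" by (simp add: power2_eq_square algebra_simps)
  have "(real n + 1) * (pi * pi) < (real n + 1) * 16" using p2 by (intro mult_strict_left_mono) auto
  then have "(real n + 1) * (pi * pi) < 2 * (2*real n+1)^2" using big by simp
  then have "(real n + 1) * (2 * w^2) < 1" unfolding w2 by (simp add: field_simps)
  moreover have "(real n + 1) * cos (2*w) \<ge> (real n + 1) * (1 - 2 * w^2)" using c by (intro mult_left_mono) auto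
  ultimately have "(real n + 1) * cos (2*w) > real n" by (simp add: algebra_simps)
  then show ?thesis unfolding eq by simp
qed

lemma S_even_trig: assumes "n = Suc k"
  shows "poly (polyS (2*n)) (cos (2*h)) * (2 * sin h * cos h)
    = -4 * cos h ^ 3 * sin ((2*real n+1)*h) + 4 * ((real n+1) * cos (2*h) + real n) * cos ((2*real n+1)*h) * sin h"
proof -
  define a where "a = (2*real n+1)*h"
  define A where "A = 2*real n*cos (2*h) + cos (2*h) + 2*real n - 1"
  define B where "B = 2*real n*cos (2*h)+3*cos (2*h)+2*real n+1"
  have e1: "(real n + 1) * (2*h) = a + h" unfolding a_def by (simp add: algebra_simps)
  have e2: "(real k + 1) * (2*h) = a - h" unfolding a_def assms by (simp add: algebra_simps)
  have U1: "poly (chebU n) (cos (2*h)) * (2 * sin h * cos h) = sin (a + h)"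
    using U_sin[of n "2*h"] unfolding e1 sin_double by simp
  have U2: "poly (chebU k) (cos (2*h)) * (2 * sin h * cos h) = sin (a - h)"
    using U_sin[of k "2*h"] unfolding e2 sin_double by simp
  have "poly (polyS (2*n)) (cos (2*h)) * (2 * sin h * cos h)
      = A * (poly (chebU n) (cos (2*h)) * (2 * sin h * cos h)) - B * (poly (chebU k) (cos (2*h)) * (2 * sin h * cos h))"
    unfolding S_even A_def B_def by (simp add: chebU_pred_def assms algebra_simps)
  also have "\<dots> = A * sin (a + h) - B * sin (a - h)" unfolding U1 U2 ..
  also have "\<dots> = (A - B) * sin a * cos h + (A + B) * cos a * sin h" by (simp add: sin_add sin_diff algebra_simps)
  also have "A - B = -4 * cos h ^ 2" unfolding A_def B_def cos_double_cos by (simp add: algebra_simps)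
  also have "A + B = 4 * ((real n+1) * cos (2*h) + real n)" unfolding A_def B_def by (simp add: algebra_simps)
  finally show ?thesis unfolding a_def by (simp add: algebra_simps power3_eq_cube power2_eq_square)
qed

lemma neg_of_prod: "(X::real) * Y < 0 \<Longrightarrow> 0 < Y \<Longrightarrow> X < 0"
  by (metis mult_nonneg_nonneg not_less less_imp_le)

lemma pos_of_prod: "(X::real) * Y > 0 \<Longrightarrow> 0 < Y \<Longrightarrow> X > 0"
  by (metis zero_less_mult_pos2 mult.commute)

lemma S_even_min: assumes "n \<ge> 2"
  shows "cos (2*real n * pi / (2*real n + 1)) < min_zero (polyS (2*n))
      \<and> min_zero (polyS (2*n)) < cos ((2*real n - 1) * pi / (2*real n + 1))"
proof -
  obtain k where k: "n = Suc k" using assms by (cases n) auto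
  define s :: real where "s = (-1)^n"
  have ss: "s * s = 1" unfolding s_def by (rule sgn_sq)
  define P where "P = polyS (2*n)"
  define hL where "hL = real n * pi / (2 * real n + 1)"
  define L where "L = cos (2*real n * pi / (2*real n + 1))"
  have LhL: "L = cos (2*hL)" unfolding L_def hL_def by (simp add: mult.assoc)
  have hL: "0 < hL" "hL < pi/2" using assms unfolding hL_def by (auto simp: field_simps)
  have Kneg: "(real n + 1) * L + real n < 0" unfolding L_def using K_neg[OF assms] .
  have Lm1: "-1 < L"
  proof -
    have "cos pi < cos (2*hL)" using hL by (subst cos_mono_less_eq) auto
    then show ?thesis unfolding LhL by simp
  qed
  have neg: "poly P x \<noteq> 0" if x: "x \<le> -1" for x
  proof -
    define u where "u = poly (chebU n) (-x)"
    define v where "v = poly (chebU k) (-x)"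
    have uv: "u \<ge> 1" "v \<ge> 1" using U_mono[of "-x" k] U_mono[of "-x" n] x unfolding u_def v_def by auto
    have Un: "poly (chebU n) x = s * u" using U_neg[of n "-x"] unfolding u_def s_def by simp
    have Uk: "poly (chebU k) x = - s * v" using U_neg[of k "-x"] unfolding v_def s_def k by simp
    have xn: "real n * x \<le> real n * (-1)" using x by (intro mult_left_mono) auto
    have A: "2*real n*x + x + 2*real n - 1 < 0" using x xn by linarith
    have B: "2*real n*x + 3*x + 2*real n + 1 < 0" using x xn by linarith
    have "(2*real n*x + x + 2*real n - 1) * u < 0" using A uv by (simp add: mult_neg_pos)
    moreover have "(2*real n*x + 3*x + 2*real n + 1) * v < 0" using B uv by (simp add: mult_neg_pos)
    ultimately have ng: "(2*real n*x + x + 2*real n - 1) * u + (2*real n*x + 3*x + 2*real n + 1) * v < 0" by simp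
    have "poly P x = s * ((2*real n*x + x + 2*real n - 1) * u + (2*real n*x + 3*x + 2*real n + 1) * v)"
      unfolding P_def S_even Un chebU_pred_def using k by (simp add: Uk algebra_simps)
    then show ?thesis using ng ss by auto
  qed
  have reg: "s * poly P (cos (2*h)) < 0" if h: "hL \<le> h" "h < pi/2" for h
  proof -
    define a where "a = (2*real n+1)*h"
    have h0: "0 < h" using h hL by simp
    have sh: "sin h > 0" using h0 h by (intro sin_gt_zero) auto
    have ch: "cos h > 0" using h0 h by (intro cos_gt_zero) auto
    have a1: "real n * pi \<le> a" using h(1) unfolding a_def hL_def by (simp add: field_simps)
    have "(2*real n + 1) * h < (2*real n + 1) * (pi/2)" using h(2) by (intro mult_strict_left_mono) auto
    then have a2: "a < real n * pi + pi/2" unfolding a_def by (simp add: algebra_simps)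
    have ssa: "s * sin a \<ge> 0"
    proof -
      have "sin (a - real n * pi) \<ge> 0" using a1 a2 by (intro sin_ge_zero) auto
      then show ?thesis unfolding s_def by (simp add: sin_diff mult.commute)
    qed
    have sca: "s * cos a > 0"
    proof -
      have "cos (a - real n * pi) > 0" using a1 a2 pi_gt_zero by (intro cos_gt_zero_pi) auto
      then show ?thesis unfolding s_def by (simp add: cos_diff mult.commute)
    qed
    have xL: "cos (2*h) \<le> L" unfolding LhL using h hL by (subst cos_mono_le_eq) auto
    have K: "(real n+1) * cos (2*h) + real n < 0"
    proof -
      have "(real n+1) * cos (2*h) \<le> (real n + 1) * L" using xL by (intro mult_left_mono) auto
      then show ?thesis using Kneg by linarith
    qed
    have t1: "-4 * cos h ^ 3 * (s * sin a) \<le> 0" using ch ssa by simp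
    have t2: "4 * ((real n+1) * cos (2*h) + real n) * (s * cos a) * sin h < 0"
      using K sca sh by (simp add: mult_neg_pos mult_pos_pos)
    have "(s * poly P (cos (2*h))) * (2 * sin h * cos h)
       = -4 * cos h ^ 3 * (s * sin a) + 4 * ((real n+1) * cos (2*h) + real n) * (s * cos a) * sin h"
      using arg_cong[OF S_even_trig[OF k, of h], of "\<lambda>z. s*z"] unfolding P_def a_def by (simp add: algebra_simps)
    also have "\<dots> < 0" using t1 t2 by linarith
    finally have "(s * poly P (cos (2*h))) * (2 * sin h * cos h) < 0" .
    moreover have "2 * sin h * cos h > 0" using sh ch by simp
    ultimately show ?thesis by (rule neg_of_prod)
  qed
  have below: "poly P x \<noteq> 0" if x: "x \<le> L" for x
  proof (cases "x \<le> -1")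
    case True then show ?thesis by (rule neg)
  next
    case False
    have tL: "0 < 2*hL" "2*hL < pi" using hL by auto
    have br: "2*hL \<le> arccos x" "arccos x < pi" "cos (arccos x) = x"
      using arccos_bridge[of x "2*hL"] False x tL unfolding LhL by auto
    have "s * poly P (cos (2 * (arccos x / 2))) < 0" using br by (intro reg) auto
    then show ?thesis using br(3) by auto
  qed
  have PL: "s * poly P L < 0" unfolding LhL using hL by (intro reg) auto
  define hR where "hR = (2*real n - 1) * pi / (2 * (2*real n + 1))"
  define R where "R = cos ((2*real n - 1) * pi / (2*real n + 1))"
  have "(2*real n - 1) * pi / (2*real n + 1) = 2 * hR" unfolding hR_def by (simp add: field_simps)
  then have RhR: "R = cos (2*hR)" unfolding R_def by simp
  have hR: "0 < hR" "hR < hL" using assms pi_gt_zero unfolding hR_def hL_def by (auto simp: field_simps intro!: add_pos_nonneg)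
  have LR: "L < R" unfolding LhL RhR using hR hL by (subst cos_mono_less_eq) auto
  have PR: "s * poly P R > 0"
  proof -
    have sh: "sin hR > 0" using hR hL by (intro sin_gt_zero) auto
    have ch: "cos hR > 0" using hR hL by (intro cos_gt_zero) auto
    have aR: "(2*real n+1)*hR = real n * pi - pi/2" unfolding hR_def by (simp add: field_simps)
    have sa: "sin ((2*real n+1)*hR) = - s" unfolding aR s_def by (simp add: sin_diff)
    have ca: "cos ((2*real n+1)*hR) = 0" unfolding aR by (simp add: cos_diff)
    have "(s * poly P R) * (2 * sin hR * cos hR) = 4 * cos hR ^ 3 * (s * s)"
      using arg_cong[OF S_even_trig[OF k, of hR], of "\<lambda>z. s*z"] unfolding P_def RhR sa ca by (simp add: algebra_simps)
    also have "\<dots> > 0" using ch ss by simp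
    finally have "(s * poly P R) * (2 * sin hR * cos hR) > 0" .
    moreover have "2 * sin hR * cos hR > 0" using sh ch by simp
    ultimately show ?thesis by (rule pos_of_prod)
  qed
  have "poly P L * poly P R < 0"
  proof -
    have "(s * poly P L) * (s * poly P R) < 0" using PL PR by (simp add: mult_neg_pos)
    then show ?thesis by (metis ss mult.assoc mult.left_commute mult_1)
  qed
  then obtain r where r: "L < r" "r < R" "poly P r = 0" using poly_IVT[of L R P] LR by auto
  have Pnz: "P \<noteq> 0" using PL by auto
  have "L < min_zero P \<and> min_zero P \<le> r" using min_zero_between[of L P r] below r Pnz by auto
  then show ?thesis using r unfolding P_def L_def R_def by auto
qed

theorem mainTheorem17:
  shows "min_zero (chebUe 2) = -1/2 \<and> min_zero (polyS 2) = -1/2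
   \<and> (\<forall>n::nat. n \<ge> 1 \<longrightarrow>
        -1 < min_zero (polyS (2*n+1))
      \<and> min_zero (polyS (2*n+1)) < cos ((2*real n + 1) * pi / (2*real n + 2))
      \<and> cos ((2*real n + 1) * pi / (2*real n + 2)) < min_zero (chebUe (2*n+1))
      \<and> min_zero (chebUe (2*n+1)) = cos (2*real n * pi / (2*real n + 2)))
   \<and> (\<forall>n::nat. n \<ge> 2 \<longrightarrow>
        -1 < min_zero (chebUe (2*n))
      \<and> min_zero (chebUe (2*n)) = cos (2*real n * pi / (2*real n + 1))
      \<and> cos (2*real n * pi / (2*real n + 1)) < min_zero (polyS (2*n))
      \<and> min_zero (polyS (2*n)) < cos ((2*real n - 1) * pi / (2*real n + 1)))"
proof (intro conjI allI impI)
  have e2: "chebUe 2 = chebU 1 + chebU_pred 1" using chebUe_even[of 1] by simp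
  have pe: "poly (chebUe 2) x = 2*x + 1" for x unfolding e2 by (simp add: chebU_pred_def)
  show "min_zero (chebUe 2) = -1/2"
  proof (rule min_zero_eqI)
    show "poly (chebUe 2) (-1/2) = 0" unfolding pe by simp
    show "poly (chebUe 2) x \<noteq> 0" if "x < -1/2" for x using that unfolding pe by simp
    show "chebUe 2 \<noteq> 0" using pe[of 0] by auto
  qed
  have ps: "poly (polyS 2) x = 3 * ((2*x + 1) * (x - 1))" for x
    using S_even[of 1 x] by (simp add: chebU_pred_def algebra_simps numeral_2_eq_2)
  show "min_zero (polyS 2) = -1/2"
  proof (rule min_zero_eqI)
    show "poly (polyS 2) (-1/2) = 0" unfolding ps by simp
    show "poly (polyS 2) x \<noteq> 0" if "x < -1/2" for x using that unfolding ps by simp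
    show "polyS 2 \<noteq> 0" using ps[of 0] by auto
  qed
next
  fix n :: nat assume n: "n \<ge> 1"
  show "-1 < min_zero (polyS (2*n+1))" using S_odd_min[OF n] by simp
  show "min_zero (polyS (2*n+1)) < cos ((2*real n + 1) * pi / (2*real n + 2))" using S_odd_min[OF n] by simp
  have eq: "2*real n * pi / (2*real n + 2) = real n * pi / (real n + 1)" by (simp add: field_simps)
  show mz: "min_zero (chebUe (2*n+1)) = cos (2*real n * pi / (2*real n + 2))"
    unfolding chebUe_odd eq using U_min_zero[OF n] .
  have "real n * pi / (real n + 1) < (2*real n + 1) * pi / (2*real n + 2)" using pi_gt_zero by (simp add: field_simps add_pos_nonneg)
  moreover have "0 \<le> real n * pi / (real n + 1)" by simp
  moreover have "(2*real n + 1) * pi / (2*real n + 2) \<le> pi" using pi_gt_zero by (simp add: field_simps)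
  ultimately have "cos ((2*real n + 1) * pi / (2*real n + 2)) < cos (real n * pi / (real n + 1))"
    by (subst cos_mono_less_eq) auto
  then show "cos ((2*real n + 1) * pi / (2*real n + 2)) < min_zero (chebUe (2*n+1))"
    unfolding mz eq .
next
  fix n :: nat assume n: "n \<ge> 2"
  have n1: "n \<ge> 1" using n by simp
  show mz: "min_zero (chebUe (2*n)) = cos (2*real n * pi / (2*real n + 1))"
    unfolding chebUe_even[OF n1] using V_min_zero[OF n1] .
  have "0 \<le> 2*real n * pi / (2*real n + 1)" by simp
  moreover have "2*real n * pi / (2*real n + 1) < pi" using pi_gt_zero by (simp add: field_simps)
  ultimately have "cos pi < cos (2*real n * pi / (2*real n + 1))" by (subst cos_mono_less_eq) auto
  then show "-1 < min_zero (chebUe (2*n))" unfolding mz by simp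
  show "cos (2*real n * pi / (2*real n + 1)) < min_zero (polyS (2*n))" using S_even_min[OF n] by simp
  show "min_zero (polyS (2*n)) < cos ((2*real n - 1) * pi / (2*real n + 1))" using S_even_min[OF n] by simp
qed

end
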